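(* Let $p$ be an odd prime and $\mathbb O$ Zorn's split octonion algebra over $\mathbb Q_p$. For integers $a_1,\dots,a_8$ let $\Lambda$ be the set of all $\begin{pmatrix}x&(y_1,y_2,y_3)\\ (z_1,z_2,z_3)&w\end{pmatrix}\in\mathbb O$ with $x\in p^{a_1}\mathbb Z_p$, $y_1\in p^{a_2}\mathbb Z_p$, $y_2\in p^{a_3}\mathbb Z_p$, $y_3\in p^{a_4}\mathbb Z_p$, $z_1\in p^{a_5}\mathbb Z_p$, $z_2\in p^{a_6}\mathbb Z_p$, $z_3\in p^{a_7}\mathbb Z_p$, $w\in p^{a_8}\mathbb Z_p$. Then $\Lambda$ is an order in $\mathbb O$ if and only if all of the following hold: $a_1=a_8=0$; $a_2+a_5\ge0$, $a_3+a_6\ge0$, $a_4+a_7\ge0$; $a_2+a_3\ge a_7$, $a_2+a_4\ge a_6$, $a_3+a_4\ge a_5$, $a_5+a_6\ge a_4$, $a_5+a_7\ge a_3$, $a_6+a_7\ge a_2$.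
   Context: Zorn's split octonion algebra $\mathbb O$ over a field $k$ is the set of formal matrices $\begin{pmatrix}a&\vec v\\ \vec w&d\end{pmatrix}$ with $a,d\in k$, $\vec v,\vec w\in k^3$, with entrywise addition and multiplication $\begin{pmatrix}a&\vec v\\ \vec w&d\end{pmatrix}\begin{pmatrix}\alpha&\vec\phi\\ \vec\psi&\delta\end{pmatrix}=\begin{pmatrix}a\alpha+\vec v\cdot\vec\psi & a\vec\phi+\delta\vec v-\vec w\times\vec\psi\\ \alpha\vec w+d\vec\psi+\vec v\times\vec\phi & d\delta+\vec w\cdot\vec\phi\end{pmatrix}$ (standard dot and cross products), identity $\mathbf 1=\begin{pmatrix}1&0\\0&1\end{pmatrix}$. A lattice in $\mathbb O$ is a finitely generated $\mathbb Z_p$-submodule $\Lambda$ with $\Lambda\otimes\mathbb Q_p=\mathbb O$. An order is a lattice which is a unital subring (contains $\mathbf 1$ and is closed under multiplication). *)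

theory Defs
  imports Main "HOL-Computational_Algebra.Primes"
begin

text \<open>The field Q_p is characterised axiomatically (up to isomorphism) as a field 'k
  with a discrete valuation v (v is only meaningful on nonzero elements) such that
  v(p) = 1, the residue field is Z/p (every integral element is congruent to an
  integer mod p), and 'k is complete for v.\<close>

definition is_Qp :: "nat \<Rightarrow> ('k::field \<Rightarrow> int) \<Rightarrow> bool" where
  "is_Qp p v \<longleftrightarrow>
     prime p \<and>
     (\<forall>x y. x \<noteq> 0 \<longrightarrow> y \<noteq> 0 \<longrightarrow> v (x * y) = v x + v y) \<and>
     (\<forall>x y. x \<noteq> 0 \<longrightarrow> y \<noteq> 0 \<longrightarrow> x + y \<noteq> 0 \<longrightarrow> min (v x) (v y) \<le> v (x + y)) \<and>
     (of_nat p :: 'k) \<noteq> 0 \<and> v (of_nat p) = 1 \<and>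
     (\<forall>x. x \<noteq> 0 \<longrightarrow> 0 \<le> v x \<longrightarrow> (\<exists>n::int. x = of_int n \<or> 1 \<le> v (x - of_int n))) \<and>
     (\<forall>s :: nat \<Rightarrow> 'k.
        (\<forall>N::int. \<exists>M. \<forall>m\<ge>M. \<forall>n\<ge>M. s m \<noteq> s n \<longrightarrow> N \<le> v (s m - s n)) \<longrightarrow>
        (\<exists>L. \<forall>N::int. \<exists>M. \<forall>n\<ge>M. s n \<noteq> L \<longrightarrow> N \<le> v (s n - L)))"

definition Zp :: "('k::field \<Rightarrow> int) \<Rightarrow> 'k set" where
  "Zp v = {z. z = 0 \<or> 0 \<le> v z}"

definition pZp :: "nat \<Rightarrow> ('k::field \<Rightarrow> int) \<Rightarrow> int \<Rightarrow> 'k set" where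
  "pZp p v a = {(of_nat p) powi a * z | z. z \<in> Zp v}"

datatype 'k oct = Oct 'k "'k \<times> 'k \<times> 'k" "'k \<times> 'k \<times> 'k" 'k

type_synonym 'k vec3 = "'k \<times> 'k \<times> 'k"

fun dot3 :: "'k::comm_ring_1 vec3 \<Rightarrow> 'k vec3 \<Rightarrow> 'k" where
  "dot3 (a1, a2, a3) (b1, b2, b3) = a1 * b1 + a2 * b2 + a3 * b3"

fun cross3 :: "'k::comm_ring_1 vec3 \<Rightarrow> 'k vec3 \<Rightarrow> 'k vec3" where
  "cross3 (a1, a2, a3) (b1, b2, b3) = (a2 * b3 - a3 * b2, a3 * b1 - a1 * b3, a1 * b2 - a2 * b1)"

fun add3 :: "'k::comm_ring_1 vec3 \<Rightarrow> 'k vec3 \<Rightarrow> 'k vec3" where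
  "add3 (a1, a2, a3) (b1, b2, b3) = (a1 + b1, a2 + b2, a3 + b3)"

fun sc3 :: "'k::comm_ring_1 \<Rightarrow> 'k vec3 \<Rightarrow> 'k vec3" where
  "sc3 c (a1, a2, a3) = (c * a1, c * a2, c * a3)"

fun minus3 :: "'k::comm_ring_1 vec3 \<Rightarrow> 'k vec3 \<Rightarrow> 'k vec3" where
  "minus3 (a1, a2, a3) (b1, b2, b3) = (a1 - b1, a2 - b2, a3 - b3)"

fun oct_mult :: "'k::comm_ring_1 oct \<Rightarrow> 'k oct \<Rightarrow> 'k oct" where
  "oct_mult (Oct a v w d) (Oct \<alpha> \<phi> \<psi> \<delta>) =
     Oct (a * \<alpha> + dot3 v \<psi>)
         (minus3 (add3 (sc3 a \<phi>) (sc3 \<delta> v)) (cross3 w \<psi>))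
         (add3 (add3 (sc3 \<alpha> w) (sc3 d \<psi>)) (cross3 v \<phi>))
         (d * \<delta> + dot3 w \<phi>)"

fun oct_add :: "'k::comm_ring_1 oct \<Rightarrow> 'k oct \<Rightarrow> 'k oct" where
  "oct_add (Oct a v w d) (Oct a' v' w' d') = Oct (a + a') (add3 v v') (add3 w w') (d + d')"

fun oct_smult :: "'k::comm_ring_1 \<Rightarrow> 'k oct \<Rightarrow> 'k oct" where
  "oct_smult c (Oct a v w d) = Oct (c * a) (sc3 c v) (sc3 c w) (c * d)"

definition oct_zero :: "'k::comm_ring_1 oct" where
  "oct_zero = Oct 0 (0, 0, 0) (0, 0, 0) 0"

definition oct_one :: "'k::comm_ring_1 oct" where
  "oct_one = Oct 1 (0, 0, 0) (0, 0, 0) 1"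

definition lin_comb :: "('k::comm_ring_1 \<times> 'k oct) list \<Rightarrow> 'k oct" where
  "lin_comb cs = foldr (\<lambda>(c, g) acc. oct_add (oct_smult c g) acc) cs oct_zero"

text \<open>A lattice: a finitely generated Z_p-submodule whose Q_p-span is all of O
  (for a submodule of the torsion-free module O this is Lambda \<otimes> Q_p = O).\<close>
definition is_lattice :: "('k::field \<Rightarrow> int) \<Rightarrow> 'k oct set \<Rightarrow> bool" where
  "is_lattice v L \<longleftrightarrow>
     (\<exists>gs :: 'k oct list.
        L = {lin_comb (zip cs gs) | cs. length cs = length gs \<and> set cs \<subseteq> Zp v}) \<and>
     (\<forall>x. \<exists>cs gs. set gs \<subseteq> L \<and> x = lin_comb (zip cs gs))"

definition is_order :: "('k::field \<Rightarrow> int) \<Rightarrow> 'k oct set \<Rightarrow> bool" where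
  "is_order v L \<longleftrightarrow> is_lattice v L \<and> oct_one \<in> L \<and>
     (\<forall>x\<in>L. \<forall>y\<in>L. oct_mult x y \<in> L)"

definition Lam :: "nat \<Rightarrow> ('k::field \<Rightarrow> int) \<Rightarrow> int \<Rightarrow> int \<Rightarrow> int \<Rightarrow> int \<Rightarrow> int \<Rightarrow> int \<Rightarrow> int \<Rightarrow> int
    \<Rightarrow> 'k oct set" where
  "Lam p v a1 a2 a3 a4 a5 a6 a7 a8 =
     {Oct x (y1, y2, y3) (z1, z2, z3) w | x y1 y2 y3 z1 z2 z3 w.
        x \<in> pZp p v a1 \<and> y1 \<in> pZp p v a2 \<and> y2 \<in> pZp p v a3 \<and> y3 \<in> pZp p v a4 \<and>
        z1 \<in> pZp p v a5 \<and> z2 \<in> pZp p v a6 \<and> z3 \<in> pZp p v a7 \<and> w \<in> pZp p v a8}"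

end

theory Submission
  imports Defs
begin

lemma Qp_facts:
  assumes "is_Qp p v"
  shows "\<And>x y. x \<noteq> 0 \<Longrightarrow> y \<noteq> 0 \<Longrightarrow> v (x * y) = v x + v y"
    and "\<And>x y. x \<noteq> 0 \<Longrightarrow> y \<noteq> 0 \<Longrightarrow> x + y \<noteq> 0 \<Longrightarrow> min (v x) (v y) \<le> v (x + y)"
    and "(of_nat p :: 'k::field) \<noteq> 0" and "v (of_nat p :: 'k) = 1"
  using assms unfolding is_Qp_def by auto

lemma v_one: assumes "is_Qp p (v::'k::field \<Rightarrow> int)" shows "v 1 = 0"
  using Qp_facts(1)[OF assms, of 1 1] by simp

lemma v_inv: assumes "is_Qp p (v::'k::field \<Rightarrow> int)" "x \<noteq> 0" shows "v (inverse x) = - v x"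
  using Qp_facts(1)[OF assms(1), of x "inverse x"] assms v_one[OF assms(1)] by simp

lemma v_neg: assumes "is_Qp p (v::'k::field \<Rightarrow> int)" shows "v (- x) = v x"
proof (cases "x = 0")
  case False
  have m1: "v (-1::'k) = 0" using Qp_facts(1)[OF assms, of "-1" "-1"] v_one[OF assms] by simp
  show ?thesis using Qp_facts(1)[OF assms, of "-1" x] False m1 by simp
qed simp

lemma v_pow_nat: assumes "is_Qp p (v::'k::field \<Rightarrow> int)" shows "v ((of_nat p::'k) ^ n) = int n"
proof (induction n)
  case 0 then show ?case using v_one[OF assms] by simp
next
  case (Suc n)
  then show ?case using Qp_facts(1)[OF assms, of "of_nat p" "(of_nat p::'k)^n"] Qp_facts(3,4)[OF assms]
    by simp
qed

lemma v_powi: assumes "is_Qp p (v::'k::field \<Rightarrow> int)" shows "v ((of_nat p::'k) powi a) = a"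
proof (cases "a \<ge> 0")
  case True
  define n where "n = nat a"
  have "a = int n" using True n_def by simp
  then show ?thesis using v_pow_nat[OF assms] by simp
next
  case False
  define n where "n = nat (- a)"
  have n: "a = - int n" using False n_def by simp
  have "(of_nat p::'k) ^ n \<noteq> 0" using Qp_facts(3)[OF assms] by simp
  then show ?thesis using n v_pow_nat[OF assms, of n] v_inv[OF assms] by (simp add: power_int_minus)
qed

lemma pZp_char: assumes "is_Qp p (v::'k::field \<Rightarrow> int)"
  shows "pZp p v a = {x. x = 0 \<or> a \<le> v x}"
proof -
  let ?P = "(of_nat p::'k) powi a"
  have P0: "?P \<noteq> 0" using Qp_facts(3)[OF assms] by simp
  have vP: "v ?P = a" by (rule v_powi[OF assms])
  show ?thesis
  proof (intro set_eqI iffI)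
    fix x assume "x \<in> pZp p v a"
    then obtain z where x: "x = ?P * z" and z: "z = 0 \<or> 0 \<le> v z" unfolding pZp_def Zp_def by auto
    show "x \<in> {x. x = 0 \<or> a \<le> v x}"
    proof (cases "z = 0")
      case False
      then show ?thesis using x z Qp_facts(1)[OF assms P0 False] vP by simp
    qed (simp add: x)
  next
    fix x assume x: "x \<in> {x. x = 0 \<or> a \<le> v x}"
    have eq: "x = ?P * (inverse ?P * x)" using P0 by simp
    have "inverse ?P * x \<in> Zp v"
    proof (cases "x = 0")
      case False
      have "inverse ?P \<noteq> 0" using P0 by simp
      then show ?thesis using x False Qp_facts(1)[OF assms, of "inverse ?P" x] v_inv[OF assms P0] vP
        unfolding Zp_def by simp
    qed (simp add: Zp_def)
    then show "x \<in> pZp p v a" unfolding pZp_def using eq by blast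
  qed
qed

lemma pZp_add: assumes "is_Qp p (v::'k::field \<Rightarrow> int)" "x \<in> pZp p v a" "y \<in> pZp p v a"
  shows "x + y \<in> pZp p v a"
  using assms(2,3) Qp_facts(2)[OF assms(1), of x y] unfolding pZp_char[OF assms(1)]
  by (cases "x = 0"; cases "y = 0"; cases "x + y = 0"; auto)

lemma pZp_neg: assumes "is_Qp p (v::'k::field \<Rightarrow> int)" "x \<in> pZp p v a"
  shows "- x \<in> pZp p v a"
  using assms(2) v_neg[OF assms(1), of x] unfolding pZp_char[OF assms(1)] by auto

lemma pZp_diff: assumes "is_Qp p (v::'k::field \<Rightarrow> int)" "x \<in> pZp p v a" "y \<in> pZp p v a"
  shows "x - y \<in> pZp p v a"
  using pZp_add[OF assms(1,2) pZp_neg[OF assms(1,3)]] by simp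

lemma pZp_mult: assumes "is_Qp p (v::'k::field \<Rightarrow> int)" "x \<in> pZp p v a" "y \<in> pZp p v b" "c \<le> a + b"
  shows "x * y \<in> pZp p v c"
  using assms(2,3,4) Qp_facts(1)[OF assms(1), of x y] unfolding pZp_char[OF assms(1)]
  by (cases "x = 0"; cases "y = 0"; auto)

lemma pZp_powi: assumes "is_Qp p (v::'k::field \<Rightarrow> int)"
  shows "(of_nat p::'k) powi b \<in> pZp p v a \<longleftrightarrow> a \<le> b"
  using v_powi[OF assms, of b] Qp_facts(3)[OF assms] unfolding pZp_char[OF assms] by auto

lemma pZp_zero: "0 \<in> pZp p v a"
  unfolding pZp_def Zp_def by auto

lemma Lam_mem: "Oct x (y1, y2, y3) (z1, z2, z3) w \<in> Lam p v a1 a2 a3 a4 a5 a6 a7 a8 \<longleftrightarrow>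
  x \<in> pZp p v a1 \<and> y1 \<in> pZp p v a2 \<and> y2 \<in> pZp p v a3 \<and> y3 \<in> pZp p v a4 \<and>
  z1 \<in> pZp p v a5 \<and> z2 \<in> pZp p v a6 \<and> z3 \<in> pZp p v a7 \<and> w \<in> pZp p v a8"
  unfolding Lam_def by auto

lemma len8: "length cs = 8 \<Longrightarrow> \<exists>c1 c2 c3 c4 c5 c6 c7 c8. cs = [c1,c2,c3,c4,c5,c6,c7,c8]"
  by (simp add: length_Suc_conv numeral_eq_Suc) blast


lemma Zp_times: "c \<in> Zp v \<Longrightarrow> c * (of_nat p) powi a \<in> pZp p v a"
  unfolding pZp_def by (auto simp: mult.commute)

lemma Lam_lattice:
  assumes Q: "is_Qp p (v::'k::field \<Rightarrow> int)"
  shows "is_lattice v (Lam p v a1 a2 a3 a4 a5 a6 a7 a8)"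
proof -
  let ?P = "of_nat p :: 'k"
  define gs where "gs = [Oct (?P powi a1) (0,0,0) (0,0,0) 0, Oct 0 (?P powi a2,0,0) (0,0,0) 0,
     Oct 0 (0,?P powi a3,0) (0,0,0) 0, Oct 0 (0,0,?P powi a4) (0,0,0) 0,
     Oct 0 (0,0,0) (?P powi a5,0,0) 0, Oct 0 (0,0,0) (0,?P powi a6,0) 0,
     Oct 0 (0,0,0) (0,0,?P powi a7) 0, Oct 0 (0,0,0) (0,0,0) (?P powi a8)]"
  have P0: "\<And>a. ?P powi a \<noteq> 0" using Qp_facts(3)[OF Q] by simp
  have lc: "lin_comb (zip [c1,c2,c3,c4,c5,c6,c7,c8] gs) =
     Oct (c1 * ?P powi a1) (c2 * ?P powi a2, c3 * ?P powi a3, c4 * ?P powi a4)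
         (c5 * ?P powi a5, c6 * ?P powi a6, c7 * ?P powi a7) (c8 * ?P powi a8)" for c1 c2 c3 c4 c5 c6 c7 c8
    by (simp add: gs_def lin_comb_def oct_zero_def)
  have A: "Lam p v a1 a2 a3 a4 a5 a6 a7 a8 =
     {lin_comb (zip cs gs) | cs. length cs = length gs \<and> set cs \<subseteq> Zp v}"
  proof (intro set_eqI iffI)
    fix x assume "x \<in> Lam p v a1 a2 a3 a4 a5 a6 a7 a8"
    then obtain x0 y1 y2 y3 z1 z2 z3 w where x: "x = Oct x0 (y1, y2, y3) (z1, z2, z3) w"
      and m: "x0 \<in> pZp p v a1" "y1 \<in> pZp p v a2" "y2 \<in> pZp p v a3" "y3 \<in> pZp p v a4"
        "z1 \<in> pZp p v a5" "z2 \<in> pZp p v a6" "z3 \<in> pZp p v a7" "w \<in> pZp p v a8"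
      unfolding Lam_def by blast
    from m obtain c1 c2 c3 c4 c5 c6 c7 c8 where
      "x0 = ?P powi a1 * c1" "y1 = ?P powi a2 * c2" "y2 = ?P powi a3 * c3" "y3 = ?P powi a4 * c4"
      "z1 = ?P powi a5 * c5" "z2 = ?P powi a6 * c6" "z3 = ?P powi a7 * c7" "w = ?P powi a8 * c8"
      and c: "c1 \<in> Zp v" "c2 \<in> Zp v" "c3 \<in> Zp v" "c4 \<in> Zp v" "c5 \<in> Zp v" "c6 \<in> Zp v"
        "c7 \<in> Zp v" "c8 \<in> Zp v"
      unfolding pZp_def by blast
    then have "x = lin_comb (zip [c1,c2,c3,c4,c5,c6,c7,c8] gs)" using x lc by (simp add: mult.commute)
    moreover have "length [c1,c2,c3,c4,c5,c6,c7,c8] = length gs" by (simp add: gs_def)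
    ultimately show "x \<in> {lin_comb (zip cs gs) | cs. length cs = length gs \<and> set cs \<subseteq> Zp v}"
      using c by (intro CollectI exI[of _ "[c1,c2,c3,c4,c5,c6,c7,c8]"]) auto
  next
    fix x assume "x \<in> {lin_comb (zip cs gs) | cs. length cs = length gs \<and> set cs \<subseteq> Zp v}"
    then obtain cs where x: "x = lin_comb (zip cs gs)" and l: "length cs = 8" and s: "set cs \<subseteq> Zp v"
      by (auto simp: gs_def)
    from len8[OF l] obtain c1 c2 c3 c4 c5 c6 c7 c8 where cs: "cs = [c1,c2,c3,c4,c5,c6,c7,c8]" by blast
    show "x \<in> Lam p v a1 a2 a3 a4 a5 a6 a7 a8"
      unfolding x cs lc Lam_mem using s cs by (auto intro!: Zp_times)
  qed
  have B: "\<exists>cs gs. set gs \<subseteq> Lam p v a1 a2 a3 a4 a5 a6 a7 a8 \<and> x = lin_comb (zip cs gs)" for x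
  proof (cases x)
    case (Oct x0 y z w)
    obtain y1 y2 y3 where y: "y = (y1, y2, y3)" by (cases y) auto
    obtain z1 z2 z3 where z: "z = (z1, z2, z3)" by (cases z) auto
    have "set gs \<subseteq> Lam p v a1 a2 a3 a4 a5 a6 a7 a8"
      by (simp add: gs_def Lam_mem pZp_powi[OF Q] pZp_zero)
    moreover have "x = lin_comb (zip [x0 / ?P powi a1, y1 / ?P powi a2, y2 / ?P powi a3, y3 / ?P powi a4,
        z1 / ?P powi a5, z2 / ?P powi a6, z3 / ?P powi a7, w / ?P powi a8] gs)"
      unfolding lc using P0 Oct y z by simp
    ultimately show ?thesis by blast
  qed
  show ?thesis unfolding is_lattice_def using A B by blast
qed


lemma prod_mem:
  assumes Q: "is_Qp p (v::'k::field \<Rightarrow> int)"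
  shows "(of_nat p::'k) powi b * (of_nat p::'k) powi c \<in> pZp p v a \<longleftrightarrow> a \<le> b + c"
proof -
  have "(of_nat p::'k) powi b * (of_nat p::'k) powi c = (of_nat p::'k) powi (b + c)"
    using Qp_facts(3)[OF Q] by (simp add: power_int_add)
  then show ?thesis using pZp_powi[OF Q] by simp
qed

lemma neg_mem:
  assumes Q: "is_Qp p (v::'k::field \<Rightarrow> int)"
  shows "- x \<in> pZp p v a \<longleftrightarrow> x \<in> pZp p v a"
  using pZp_neg[OF Q, of x a] pZp_neg[OF Q, of "-x" a] by auto

lemma one_mem:
  assumes Q: "is_Qp p (v::'k::field \<Rightarrow> int)"
  shows "1 \<in> pZp p v a \<longleftrightarrow> a \<le> 0"
  using pZp_powi[OF Q, of 0 a] by simp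

theorem mainTheorem11:
  fixes p :: nat and v :: "'k::field \<Rightarrow> int" and a1 a2 a3 a4 a5 a6 a7 a8 :: int
  assumes "is_Qp p v" and "odd p"
  shows "is_order v (Lam p v a1 a2 a3 a4 a5 a6 a7 a8) \<longleftrightarrow>
    (a1 = 0 \<and> a8 = 0 \<and>
     a2 + a5 \<ge> 0 \<and> a3 + a6 \<ge> 0 \<and> a4 + a7 \<ge> 0 \<and>
     a2 + a3 \<ge> a7 \<and> a2 + a4 \<ge> a6 \<and> a3 + a4 \<ge> a5 \<and>
     a5 + a6 \<ge> a4 \<and> a5 + a7 \<ge> a3 \<and> a6 + a7 \<ge> a2)"
proof -
  note Q = assms(1)
  let ?P = "of_nat p :: 'k"
  let ?L = "Lam p v a1 a2 a3 a4 a5 a6 a7 a8"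
  have P0: "\<And>a. ?P powi a \<noteq> 0" using Qp_facts(3)[OF Q] by simp
  note S = Lam_mem pZp_zero prod_mem[OF Q] neg_mem[OF Q] one_mem[OF Q] pZp_powi[OF Q] oct_one_def
  show ?thesis
  proof
    assume O: "is_order v ?L"
    then have one: "oct_one \<in> ?L" and cl: "\<And>x y. x \<in> ?L \<Longrightarrow> y \<in> ?L \<Longrightarrow> oct_mult x y \<in> ?L"
      unfolding is_order_def by auto
    define e1 where "e1 = Oct (?P powi a1) (0,0,0) (0,0,0) 0"
    define e2 where "e2 = Oct 0 (?P powi a2,0,0) (0,0,0) 0"
    define e3 where "e3 = Oct 0 (0,?P powi a3,0) (0,0,0) 0"
    define e4 where "e4 = Oct 0 (0,0,?P powi a4) (0,0,0) 0"
    define e5 where "e5 = Oct 0 (0,0,0) (?P powi a5,0,0) 0"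
    define e6 where "e6 = Oct 0 (0,0,0) (0,?P powi a6,0) 0"
    define e7 where "e7 = Oct 0 (0,0,0) (0,0,?P powi a7) 0"
    define e8 where "e8 = Oct 0 (0,0,0) (0,0,0) (?P powi a8)"
    have E: "e1 \<in> ?L" "e2 \<in> ?L" "e3 \<in> ?L" "e4 \<in> ?L" "e5 \<in> ?L" "e6 \<in> ?L" "e7 \<in> ?L" "e8 \<in> ?L"
      unfolding e1_def e2_def e3_def e4_def e5_def e6_def e7_def e8_def by (simp_all add: S)
    have "a1 \<le> 0" "a8 \<le> 0" using one by (simp_all add: S)
    moreover have "a1 \<le> a1 + a1" using cl[OF E(1) E(1)] by (simp add: S e1_def)
    moreover have "a8 \<le> a8 + a8" using cl[OF E(8) E(8)] by (simp add: S e8_def)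
    moreover have "a1 \<le> a2 + a5" using cl[OF E(2) E(5)] by (simp add: S e2_def e5_def)
    moreover have "a1 \<le> a3 + a6" using cl[OF E(3) E(6)] by (simp add: S e3_def e6_def)
    moreover have "a1 \<le> a4 + a7" using cl[OF E(4) E(7)] by (simp add: S e4_def e7_def)
    moreover have "a7 \<le> a2 + a3" using cl[OF E(2) E(3)] by (simp add: S e2_def e3_def)
    moreover have "a6 \<le> a4 + a2" using cl[OF E(4) E(2)] by (simp add: S e4_def e2_def)
    moreover have "a5 \<le> a3 + a4" using cl[OF E(3) E(4)] by (simp add: S e3_def e4_def)
    moreover have "a4 \<le> a5 + a6" using cl[OF E(5) E(6)] by (simp add: S e5_def e6_def)
    moreover have "a3 \<le> a7 + a5" using cl[OF E(7) E(5)] by (simp add: S e7_def e5_def)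
    moreover have "a2 \<le> a6 + a7" using cl[OF E(6) E(7)] by (simp add: S e6_def e7_def)
    ultimately show "a1 = 0 \<and> a8 = 0 \<and>
     a2 + a5 \<ge> 0 \<and> a3 + a6 \<ge> 0 \<and> a4 + a7 \<ge> 0 \<and>
     a2 + a3 \<ge> a7 \<and> a2 + a4 \<ge> a6 \<and> a3 + a4 \<ge> a5 \<and>
     a5 + a6 \<ge> a4 \<and> a5 + a7 \<ge> a3 \<and> a6 + a7 \<ge> a2" by linarith
  next
    assume C: "a1 = 0 \<and> a8 = 0 \<and>
     a2 + a5 \<ge> 0 \<and> a3 + a6 \<ge> 0 \<and> a4 + a7 \<ge> 0 \<and>
     a2 + a3 \<ge> a7 \<and> a2 + a4 \<ge> a6 \<and> a3 + a4 \<ge> a5 \<and>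
     a5 + a6 \<ge> a4 \<and> a5 + a7 \<ge> a3 \<and> a6 + a7 \<ge> a2"
    have one: "oct_one \<in> ?L" using C by (simp add: S)
    have cl: "oct_mult x y \<in> ?L" if x: "x \<in> ?L" and y: "y \<in> ?L" for x y
    proof -
      from x obtain x0 y1 y2 y3 z1 z2 z3 w where xe: "x = Oct x0 (y1, y2, y3) (z1, z2, z3) w"
        and hx: "x0 \<in> pZp p v a1" "y1 \<in> pZp p v a2" "y2 \<in> pZp p v a3" "y3 \<in> pZp p v a4"
          "z1 \<in> pZp p v a5" "z2 \<in> pZp p v a6" "z3 \<in> pZp p v a7" "w \<in> pZp p v a8"
        unfolding Lam_def by blast
      from y obtain x0' y1' y2' y3' z1' z2' z3' w' where ye: "y = Oct x0' (y1', y2', y3') (z1', z2', z3') w'"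
        and hy: "x0' \<in> pZp p v a1" "y1' \<in> pZp p v a2" "y2' \<in> pZp p v a3" "y3' \<in> pZp p v a4"
          "z1' \<in> pZp p v a5" "z2' \<in> pZp p v a6" "z3' \<in> pZp p v a7" "w' \<in> pZp p v a8"
        unfolding Lam_def by blast
      show ?thesis unfolding xe ye using hx hy C
        apply (elim conjE)
        apply (simp only: oct_mult.simps dot3.simps cross3.simps add3.simps sc3.simps minus3.simps Lam_mem)
        apply (intro conjI pZp_add[OF Q] pZp_diff[OF Q] pZp_mult[OF Q])
        apply (assumption | linarith)+
        done
    qed
    show "is_order v ?L" unfolding is_order_def using Lam_lattice[OF Q] one cl by blast
  qed
qed

end
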